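(* Let $\alpha\in(0,1)$ and $c>0$, and let $K_\alpha$ be a class of finite simple undirected graphs that is closed under taking subgraphs and such that every graph $H\in K_\alpha$ with $h$ vertices has a balanced separator of cardinality at most $c\,h^{\alpha}$. Then there is a constant $C$ depending only on $\alpha$ and $c$ such that for every $G\in K_\alpha$ with $n\ge 1$ vertices, every nested dissection order $\pi$ of $G$ and every vertex $v$, the search space $\mathrm{SS}(v)$ in $G_\pi^\wedge$ has at most $C\,n^{\alpha}$ vertices.
   Context: Let $G=(V,E)$ be a finite simple undirected graph with $n=|V|$ vertices. A vertex order is a bijection $\pi:\{1,\dots,n\}\to V$; the rank of $v$ is $\pi^{-1}(v)$. Contracting a vertex $v$ in a graph means deleting $v$ and its incident edges and adding an edge between every pair of former neighbors of $v$ that are not already adjacent. The core graph $G_{\pi,i}$ is obtained from $G$ by contracting $\pi(1),\dots,\pi(i-1)$ in this order. $G_\pi^*$ is the graph on $V$ whose edge set is the union of the edge sets of all $G_{\pi,i}$, $i=1,\dots,n$ (i.e. $G$ together with all edges inserted during the contractions). $G_\pi^\wedge$ is the directed graph obtained from $G_\pi^*$ by orienting every edge from its endpoint of lower rank to its endpoint of higher rank. The search space $\mathrm{SS}(v)$ is the subgraph of $G_\pi^\wedge$ induced by the set of vertices reachable from $v$ in $G_\pi^\wedge$ (including $v$). A balanced separator of a graph with vertex set $V$, $|V|=n$, is a set $S\subseteq V$ such that $V\setminus S$ can be partitioned into sets $A,B$ (possibly empty) with no edge between $A$ and $B$ and $|A|,|B|\le 2n/3$. A nested dissection order of $G$ is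 defined recursively: if $G$ is empty it is the empty order; otherwise choose a balanced separator $S$ of $G$ of minimum cardinality with corresponding parts $A,B$, give the vertices of $S$ the ranks $n-|S|+1,\dots,n$ in arbitrary order, give the vertices of $A$ the ranks $1,\dots,|A|$ according to a nested dissection order of $G[A]$, and the vertices of $B$ the ranks $|A|+1,\dots,|A|+|B|$ according to a nested dissection order of $G[B]$. *)

theory Defs
  imports Complex_Main
begin

definition simple_graph :: "'a set \<Rightarrow> 'a set set \<Rightarrow> bool" where
  "simple_graph V E \<longleftrightarrow> finite V \<and>
     (\<forall>e\<in>E. \<exists>u w. u \<noteq> w \<and> u \<in> V \<and> w \<in> V \<and> e = {u, w})"

definition induced_edges :: "'a set set \<Rightarrow> 'a set \<Rightarrow> 'a set set" where
  "induced_edges E A = {e \<in> E. e \<subseteq> A}"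

definition is_bal_sep :: "'a set \<Rightarrow> 'a set set \<Rightarrow> 'a set \<Rightarrow> 'a set \<Rightarrow> 'a set \<Rightarrow> bool" where
  "is_bal_sep V E S A B \<longleftrightarrow> S \<subseteq> V \<and> A \<union> B = V - S \<and> A \<inter> B = {} \<and>
     (\<forall>a\<in>A. \<forall>b\<in>B. {a, b} \<notin> E) \<and>
     3 * card A \<le> 2 * card V \<and> 3 * card B \<le> 2 * card V"

definition is_min_bal_sep :: "'a set \<Rightarrow> 'a set set \<Rightarrow> 'a set \<Rightarrow> 'a set \<Rightarrow> 'a set \<Rightarrow> bool" where
  "is_min_bal_sep V E S A B \<longleftrightarrow> is_bal_sep V E S A B \<and>
     (\<forall>S' A' B'. is_bal_sep V E S' A' B' \<longrightarrow> card S \<le> card S')"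

inductive nd_order :: "'a set \<Rightarrow> 'a set set \<Rightarrow> (nat \<Rightarrow> 'a) \<Rightarrow> bool" where
  nd_empty: "nd_order {} E \<pi>"
| nd_step: "\<lbrakk> V \<noteq> {}; bij_betw \<pi> {1..card V} V;
              is_min_bal_sep V E S A B;
              bij_betw \<pi> {card V - card S + 1..card V} S;
              nd_order A (induced_edges E A) \<pi>;
              nd_order B (induced_edges E B) (\<lambda>i. \<pi> (card A + i)) \<rbrakk>
             \<Longrightarrow> nd_order V E \<pi>"

definition contract_edges :: "'a set set \<Rightarrow> 'a \<Rightarrow> 'a set set" where
  "contract_edges E v = {e \<in> E. v \<notin> e} \<union>
     {{x, y} | x y. x \<noteq> y \<and> {x, v} \<in> E \<and> {y, v} \<in> E}"

definition contract_vertices :: "'a set \<Rightarrow> 'a \<Rightarrow> 'a set" where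
  "contract_vertices V v = V - {v}"

text \<open>core_edges E pi k: edges after contracting pi 1, ..., pi k in this order;
  so the core graph G_{pi,i} has edge set core_edges E pi (i - 1).\<close>
fun core_edges :: "'a set set \<Rightarrow> (nat \<Rightarrow> 'a) \<Rightarrow> nat \<Rightarrow> 'a set set" where
  "core_edges E \<pi> 0 = E"
| "core_edges E \<pi> (Suc k) = contract_edges (core_edges E \<pi> k) (\<pi> (Suc k))"

definition star_edges :: "'a set \<Rightarrow> 'a set set \<Rightarrow> (nat \<Rightarrow> 'a) \<Rightarrow> 'a set set" where
  "star_edges V E \<pi> = (\<Union>i\<in>{1..card V}. core_edges E \<pi> (i - 1))"

definition rank :: "'a set \<Rightarrow> (nat \<Rightarrow> 'a) \<Rightarrow> 'a \<Rightarrow> nat" where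
  "rank V \<pi> v = inv_into {1..card V} \<pi> v"

definition up_arcs :: "'a set \<Rightarrow> 'a set set \<Rightarrow> (nat \<Rightarrow> 'a) \<Rightarrow> ('a \<times> 'a) set" where
  "up_arcs V E \<pi> = {(u, w). {u, w} \<in> star_edges V E \<pi> \<and> rank V \<pi> u < rank V \<pi> w}"

definition search_space :: "'a set \<Rightarrow> 'a set set \<Rightarrow> (nat \<Rightarrow> 'a) \<Rightarrow> 'a \<Rightarrow> 'a set" where
  "search_space V E \<pi> v = {w. (v, w) \<in> (up_arcs V E \<pi>)\<^sup>*}"

definition subgraph_closed :: "('a set \<times> 'a set set) set \<Rightarrow> bool" where
  "subgraph_closed K \<longleftrightarrow> (\<forall>V E V' E'. (V, E) \<in> K \<longrightarrow> V' \<subseteq> V \<longrightarrow> E' \<subseteq> E \<longrightarrow>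
      (\<forall>e\<in>E'. e \<subseteq> V') \<longrightarrow> (V', E') \<in> K)"

end

theory Submission
  imports Defs
begin

inductive lp :: "'a set set \<Rightarrow> ('a \<Rightarrow> nat) \<Rightarrow> nat \<Rightarrow> 'a \<Rightarrow> 'a \<Rightarrow> bool" for E r k where
  lp_edge: "{x,y} \<in> E \<Longrightarrow> lp E r k x y"
| lp_via: "lp E r k x z \<Longrightarrow> lp E r k z y \<Longrightarrow> r z \<le> k \<Longrightarrow> lp E r k x y"

lemma lp_sym: "lp E r k x y \<Longrightarrow> lp E r k y x"
  by (induction rule: lp.induct) (auto simp: insert_commute intro: lp.intros)

lemma lp_mono: "lp E r k x y \<Longrightarrow> k \<le> k' \<Longrightarrow> lp E r k' x y"
  by (induction rule: lp.induct) (auto intro: lp.intros)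

lemma lp_cross:
  assumes "lp E r k x y" "x \<in> X" "k \<le> t" "\<forall>a\<in>X. \<forall>b. {a,b} \<in> E \<longrightarrow> b \<in> X \<or> r b > t"
  shows "y \<in> X \<or> r y > t"
  using assms by (induction rule: lp.induct) force+

lemma nd_bij: "nd_order W F \<rho> \<Longrightarrow> bij_betw \<rho> {1..card W} W"
  by (cases rule: nd_order.cases) (auto simp: bij_betw_def)

lemma pow_bound:
  assumes "3 * a \<le> 2 * (w::nat)" "0 < (\<alpha>::real)"
  shows "real a powr \<alpha> \<le> (2/3) powr \<alpha> * real w powr \<alpha>"
proof -
  have "real a \<le> 2/3 * real w" using assms(1) by linarith
  then have "real a powr \<alpha> \<le> (2/3 * real w) powr \<alpha>"
    by (intro powr_mono2) (use assms in auto)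
  also have "\<dots> = (2/3) powr \<alpha> * real w powr \<alpha>" using powr_mult[of "2/3" "real w" \<alpha>] by simp
  finally show ?thesis .
qed

locale glob =
  fixes V :: "'a set" and E :: "'a set set" and \<pi> :: "nat \<Rightarrow> 'a"
  assumes sg: "simple_graph V E" and bij: "bij_betw \<pi> {1..card V} V"
begin

abbreviation "r \<equiv> rank V \<pi>"

lemma finV: "finite V" using sg simple_graph_def by auto

lemma rank_pi: "i \<in> {1..card V} \<Longrightarrow> r (\<pi> i) = i"
  using bij unfolding rank_def bij_betw_def by (simp add: inv_into_f_f)

lemma pi_rank: "x \<in> V \<Longrightarrow> \<pi> (r x) = x"
  using bij unfolding rank_def bij_betw_def by (simp add: f_inv_into_f)

lemma rank_range: "x \<in> V \<Longrightarrow> r x \<in> {1..card V}"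
  using bij unfolding rank_def bij_betw_def by (metis inv_into_into)

lemma edgeV: "{x,y} \<in> E \<Longrightarrow> x \<noteq> y \<and> x \<in> V \<and> y \<in> V"
  using sg unfolding simple_graph_def by (auto simp: doubleton_eq_iff)

lemma core_inv: "e \<in> core_edges E \<pi> k \<Longrightarrow>
   \<exists>x y. e = {x,y} \<and> x \<noteq> y \<and> x \<in> V \<and> y \<in> V \<and> r x > k \<and> r y > k \<and> lp E r k x y"
proof (induction k arbitrary: e)
  case 0
  then obtain x y where xy: "e = {x,y}" "x\<noteq>y" "x\<in>V" "y\<in>V" using sg unfolding simple_graph_def by auto
  moreover have "r x > 0" "r y > 0" using rank_range xy by fastforce+
  moreover have "lp E r 0 x y" using 0 xy by (auto intro: lp_edge)
  ultimately show ?case by blast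
next
  case (Suc k)
  define v where "v = \<pi> (Suc k)"
  have pair: "a \<noteq> b \<and> a \<in> V \<and> b \<in> V \<and> r a > k \<and> r b > k \<and> lp E r k a b"
    if "{a,b} \<in> core_edges E \<pi> k" for a b
  proof -
    from Suc.IH[OF that] obtain x y where "{a,b} = {x,y}"
      "x \<noteq> y \<and> x \<in> V \<and> y \<in> V \<and> r x > k \<and> r y > k \<and> lp E r k x y" by blast
    then show ?thesis by (auto simp: doubleton_eq_iff intro: lp_sym)
  qed
  have rv: "r x > Suc k" if "x \<in> V" "r x > k" "x \<noteq> v" for x
  proof (rule ccontr)
    assume "\<not> r x > Suc k"
    then have "r x = Suc k" using that by simp
    then have "x = \<pi> (Suc k)" using pi_rank that by metis
    then show False using that v_def by simp
  qed
  from Suc.prems have "e \<in> contract_edges (core_edges E \<pi> k) v" by (simp add: v_def)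
  then consider (old) "e \<in> core_edges E \<pi> k" "v \<notin> e"
    | (new) x y where "e = {x,y}" "x\<noteq>y" "{x,v} \<in> core_edges E \<pi> k" "{y,v} \<in> core_edges E \<pi> k"
    unfolding contract_edges_def by blast
  then show ?case
  proof cases
    case old
    then obtain x y where xy: "e = {x,y} \<and> x \<noteq> y \<and> x \<in> V \<and> y \<in> V \<and> r x > k \<and> r y > k \<and> lp E r k x y"
      using Suc.IH by blast
    then have "x\<noteq>v" "y\<noteq>v" using old by auto
    then show ?thesis using xy rv
      by (intro exI[of _ x] exI[of _ y]) (auto intro: lp_mono)
  next
    case new
    note px = pair[OF new(3)] and py = pair[OF new(4)]
    have "r v \<le> card V" using rank_range px by auto
    then have "Suc k \<le> card V" using px by linarith
    then have rvv: "r v = Suc k" unfolding v_def by (intro rank_pi) auto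
    have l1: "lp E r k x v" and l2: "lp E r k y v" using px py by auto
    have "lp E r (Suc k) x y"
      by (rule lp_via[OF lp_mono[OF l1] lp_mono[OF lp_sym[OF l2]]]) (use rvv in auto)
    then show ?thesis using new px py rv
      by (intro exI[of _ x] exI[of _ y]) auto
  qed
qed

lemma arc_inv: "(u,w) \<in> up_arcs V E \<pi> \<Longrightarrow>
   u \<noteq> w \<and> u \<in> V \<and> w \<in> V \<and> r u < r w \<and> (\<exists>k. k < r u \<and> lp E r k u w)"
proof -
  assume "(u,w) \<in> up_arcs V E \<pi>"
  then obtain i where i: "{u,w} \<in> core_edges E \<pi> (i - 1)" and lt: "r u < r w"
    unfolding up_arcs_def star_edges_def by auto
  from core_inv[OF i] obtain x y where "{u,w} = {x,y}"
    "x \<noteq> y \<and> x \<in> V \<and> y \<in> V \<and> r x > i - 1 \<and> r y > i - 1 \<and> lp E r (i - 1) x y" by blast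
  then show ?thesis using lt by (auto simp: doubleton_eq_iff intro: lp_sym)
qed

lemma rank_off: "j \<in> {1..m} \<Longrightarrow> off + m \<le> card V \<Longrightarrow> r (\<pi> (off + j)) = off + j"
  by (intro rank_pi) auto

lemma main:
  assumes nd: "nd_order W F \<rho>"
    and sc: "subgraph_closed K"
    and sepK: "\<forall>(H,F)\<in>K. \<exists>S A B. is_bal_sep H F S A B \<and> real (card S) \<le> c * real (card H) powr \<alpha>"
    and par: "0 < \<alpha>" "\<alpha> < 1" "0 < c"
  shows "F = induced_edges E W \<Longrightarrow> W \<subseteq> V \<Longrightarrow> (\<forall>i. \<rho> i = \<pi> (off+i)) \<Longrightarrow> off + card W \<le> card V
    \<Longrightarrow> (W,F) \<in> K \<Longrightarrow> (\<forall>a\<in>W. \<forall>b. {a,b} \<in> E \<longrightarrow> b \<in> W \<or> r b > off + card W) \<Longrightarrow> v \<in> W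
    \<Longrightarrow> \<exists>U. v \<in> U \<and> U \<subseteq> W \<and> real (card U) \<le> c / (1 - (2/3) powr \<alpha>) * real (card W) powr \<alpha>
          \<and> (\<forall>u\<in>U. \<forall>w. (u,w) \<in> up_arcs V E \<pi> \<longrightarrow> w \<in> U \<or> r w > off + card W)"
  using nd
proof (induction arbitrary: off v rule: nd_order.induct)
  case (nd_empty F \<rho>)
  then show ?case by simp
next
  case (nd_step W \<rho> F S A B)
  define q where "q = (2/3::real) powr \<alpha>"
  define C where "C = c / (1 - q)"
  have q0: "0 < q" unfolding q_def by simp
  have q1: "q < 1" unfolding q_def using powr_less_mono2[of \<alpha> "2/3" 1] par by simp
  have Cq: "C * q + c = C" unfolding C_def using q1 by (simp add: field_simps)
  have Cc: "c \<le> C" unfolding C_def using q0 q1 par by (simp add: field_simps)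
  have C0: "0 \<le> C" using Cc par by simp
  have FW: "F = induced_edges E W" and WV: "W \<subseteq> V" and rho: "\<forall>i. \<rho> i = \<pi> (off+i)"
    and offW: "off + card W \<le> card V" and WK: "(W,F) \<in> K"
    and HW: "\<forall>a\<in>W. \<forall>b. {a,b} \<in> E \<longrightarrow> b \<in> W \<or> r b > off + card W" and vW: "v \<in> W"
    using nd_step.prems by auto
  have finW: "finite W" using WV finV finite_subset by blast
  have bs: "is_bal_sep W F S A B" using nd_step.hyps(3) unfolding is_min_bal_sep_def by auto
  then have SW: "S \<subseteq> W" and ABW: "A \<union> B = W - S" and AB: "A \<inter> B = {}"
    and noF: "\<forall>a\<in>A. \<forall>b\<in>B. {a,b} \<notin> F" and cA: "3 * card A \<le> 2 * card W" and cB: "3 * card B \<le> 2 * card W"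
    unfolding is_bal_sep_def by auto
  have AW: "A \<subseteq> W" and BW: "B \<subseteq> W" using ABW by auto
  have finA: "finite A" and finB: "finite B" and finS: "finite S"
    using AW BW SW finW finite_subset by blast+
  have cardW: "card W = card A + card B + card S"
  proof -
    have "W = (A \<union> B) \<union> S" using ABW SW by auto
    moreover have "card (A \<union> B) = card A + card B" using finA finB AB by (simp add: card_Un_disjoint)
    moreover have "(A \<union> B) \<inter> S = {}" using ABW by auto
    ultimately show ?thesis using finA finB finS by (simp add: card_Un_disjoint)
  qed
  have bijA: "bij_betw \<rho> {1..card A} A" using nd_bij[OF nd_step.hyps(5)] .
  have bijB: "bij_betw (\<lambda>i. \<rho> (card A + i)) {1..card B} B" using nd_bij[OF nd_step.hyps(6)] .
  have bijS: "bij_betw \<rho> {card A + card B + 1..card W} S" using nd_step.hyps(4) cardW by simp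
  have rA: "x \<in> A \<Longrightarrow> off < r x \<and> r x \<le> off + card A" for x
  proof -
    assume "x \<in> A"
    then have "x \<in> \<rho> ` {1..card A}" using bijA by (simp add: bij_betw_def)
    then obtain j where j: "j \<in> {1..card A}" "x = \<rho> j" by blast
    have e: "\<rho> j = \<pi> (off + j)" using rho by blast
    have "r (\<pi> (off + j)) = off + j" by (rule rank_off[of j "card A"]) (use j offW cardW in auto)
    then have "r x = off + j" using j(2) e by simp
    then show ?thesis using j by auto
  qed
  have rB: "x \<in> B \<Longrightarrow> off + card A < r x \<and> r x \<le> off + card A + card B" for x
  proof -
    assume "x \<in> B"
    then have "x \<in> (\<lambda>i. \<rho> (card A + i)) ` {1..card B}" using bijB by (simp add: bij_betw_def)
    then obtain j where j: "j \<in> {1..card B}" "x = \<rho> (card A + j)" by blast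
    have e: "\<rho> (card A + j) = \<pi> (off + (card A + j))" using rho by blast
    have "r (\<pi> (off + (card A + j))) = off + (card A + j)" by (rule rank_off[of "card A + j" "card W"]) (use j offW cardW in auto)
    then have "r x = off + card A + j" using j(2) e by simp
    then show ?thesis using j by auto
  qed
  have rS: "x \<in> S \<Longrightarrow> off + card A + card B < r x \<and> r x \<le> off + card W" for x
  proof -
    assume "x \<in> S"
    then have "x \<in> \<rho> ` {card A + card B + 1..card W}" using bijS by (simp add: bij_betw_def)
    then obtain j where j: "j \<in> {card A + card B + 1..card W}" "x = \<rho> j" by blast
    have e: "\<rho> j = \<pi> (off + j)" using rho by blast
    have "r (\<pi> (off + j)) = off + j" by (rule rank_off[of j "card W"]) (use j offW cardW in auto)
    then have "r x = off + j" using j(2) e by simp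
    then show ?thesis using j by auto
  qed
  have inS: "w \<in> S" if "w \<in> V" "off + card A + card B < r w" "r w \<le> off + card W" for w
  proof -
    define j where "j = r w - off"
    have rw: "r w = off + j" using that(2) unfolding j_def by linarith
    have j: "j \<in> {card A + card B + 1..card W}" using that(2,3) rw by simp
    have "\<rho> j \<in> S" using bij_betw_apply[OF bijS j] .
    moreover have "\<rho> j = \<pi> (off + j)" using rho by blast
    moreover have "\<pi> (off + j) = w" using pi_rank[OF that(1)] rw by simp
    ultimately show ?thesis by simp
  qed
  have inB: "w \<in> B" if "w \<in> V" "off + card A < r w" "r w \<le> off + card A + card B" for w
  proof -
    define j where "j = r w - off - card A"
    have rw: "r w = off + (card A + j)" using that(2) unfolding j_def by linarith
    have j: "j \<in> {1..card B}" using that(2,3) rw by simp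
    have "\<rho> (card A + j) \<in> B" using bij_betw_apply[OF bijB j] by simp
    moreover have "\<rho> (card A + j) = \<pi> (off + (card A + j))" using rho by blast
    moreover have "\<pi> (off + (card A + j)) = w" using pi_rank[OF that(1)] rw by simp
    ultimately show ?thesis by simp
  qed
  have noE: "{a,b} \<notin> E" if "a \<in> A" "b \<in> B" for a b
  proof
    assume "{a,b} \<in> E"
    moreover have "{a,b} \<subseteq> W" using that AW BW by blast
    ultimately have "{a,b} \<in> F" using FW unfolding induced_edges_def by blast
    then show False using noF that by blast
  qed
  have indA: "induced_edges F A = induced_edges E A" using FW AW unfolding induced_edges_def by blast
  have indB: "induced_edges F B = induced_edges E B" using FW BW unfolding induced_edges_def by blast
  have sub: "(X, induced_edges F X) \<in> K" if "X \<subseteq> W" for X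
  proof -
    have "induced_edges F X \<subseteq> F" unfolding induced_edges_def by blast
    moreover have "\<forall>e\<in>induced_edges F X. e \<subseteq> X" unfolding induced_edges_def by blast
    ultimately show ?thesis using sc WK that unfolding subgraph_closed_def by blast
  qed
  have KA: "(A, induced_edges F A) \<in> K" using sub AW .
  have KB: "(B, induced_edges F B) \<in> K" using sub BW .
  have HA: "\<forall>a\<in>A. \<forall>b. {a,b} \<in> E \<longrightarrow> b \<in> A \<or> r b > off + card A"
  proof (intro ballI allI impI)
    fix a b assume a: "a \<in> A" and e: "{a,b} \<in> E"
    have aW: "a \<in> W" using a AW by blast
    have h: "b \<in> W \<or> r b > off + card W" using HW aW e by blast
    have nB: "b \<notin> B" using noE a e by blast
    show "b \<in> A \<or> r b > off + card A"
    proof (cases "b \<in> W")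
      case True
      then have "b \<in> A \<or> b \<in> S" using nB ABW by blast
      then show ?thesis using rS[of b] by linarith
    next
      case False
      then show ?thesis using h cardW by linarith
    qed
  qed
  have HB: "\<forall>a\<in>B. \<forall>b. {a,b} \<in> E \<longrightarrow> b \<in> B \<or> r b > off + card A + card B"
  proof (intro ballI allI impI)
    fix a b assume a: "a \<in> B" and e: "{a,b} \<in> E"
    have aW: "a \<in> W" using a BW by blast
    have h: "b \<in> W \<or> r b > off + card W" using HW aW e by blast
    have nA: "b \<notin> A" using noE[of b a] a e by (auto simp: insert_commute)
    show "b \<in> B \<or> r b > off + card A + card B"
    proof (cases "b \<in> W")
      case True
      then have "b \<in> B \<or> b \<in> S" using nA ABW by blast
      then show ?thesis using rS[of b] by linarith
    next
      case False
      then show ?thesis using h cardW by linarith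
    qed
  qed
  obtain S' A' B' where S': "is_bal_sep W F S' A' B'" "real (card S') \<le> c * real (card W) powr \<alpha>"
    using sepK WK by blast
  have cS: "real (card S) \<le> c * real (card W) powr \<alpha>"
    using nd_step.hyps(3) S' unfolding is_min_bal_sep_def by (meson of_nat_le_iff order_trans)
  have pw0: "0 \<le> real (card W) powr \<alpha>" by simp
  have Sclos: "w \<in> S \<or> r w > off + card W" if "u \<in> S" "(u,w) \<in> up_arcs V E \<pi>" for u w
  proof -
    have "w \<in> V" "r u < r w" using arc_inv[OF that(2)] by auto
    then show ?thesis using rS[OF that(1)] inS[of w] by fastforce
  qed
  consider "v \<in> A" | "v \<in> B" | "v \<in> S" using vW ABW by auto
  then show ?case
  proof cases
    case 3
    show ?thesis
    proof (intro exI[of _ S] conjI)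
      show "real (card S) \<le> c / (1 - (2/3) powr \<alpha>) * real (card W) powr \<alpha>"
        using cS Cc pw0 unfolding C_def q_def by (meson mult_right_mono order_trans)
    qed (use 3 SW Sclos in auto)
  next
    case 1
    obtain U where U: "v \<in> U" "U \<subseteq> A" "real (card U) \<le> C * real (card A) powr \<alpha>"
      "\<forall>u\<in>U. \<forall>w. (u,w) \<in> up_arcs V E \<pi> \<longrightarrow> w \<in> U \<or> r w > off + card A"
    proof -
      have o: "off + card A \<le> card V" using offW cardW by linarith
      have A': "A \<subseteq> V" using WV AW by blast
      from nd_step.IH(1)[OF indA A' rho o KA HA 1] show ?thesis using that unfolding C_def q_def by blast
    qed
    show ?thesis
    proof (intro exI[of _ "U \<union> S"] conjI)
      have "real (card (U \<union> S)) \<le> real (card U) + real (card S)"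
        by (metis card_Un_le of_nat_add of_nat_le_iff)
      also have "\<dots> \<le> C * (q * real (card W) powr \<alpha>) + c * real (card W) powr \<alpha>"
      proof -
        have "C * real (card A) powr \<alpha> \<le> C * (q * real (card W) powr \<alpha>)"
          using pow_bound[OF cA par(1)] C0 unfolding q_def by (rule mult_left_mono)
        then show ?thesis using U(3) cS by linarith
      qed
      also have "\<dots> = (C * q + c) * real (card W) powr \<alpha>" by (simp add: algebra_simps)
      also have "\<dots> = C * real (card W) powr \<alpha>" using Cq by simp
      finally show "real (card (U \<union> S)) \<le> c / (1 - (2/3) powr \<alpha>) * real (card W) powr \<alpha>"
        unfolding C_def q_def .
      show "\<forall>u\<in>U \<union> S. \<forall>w. (u,w) \<in> up_arcs V E \<pi> \<longrightarrow> w \<in> U \<union> S \<or> r w > off + card W"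
      proof (intro ballI allI impI)
        fix u w assume u: "u \<in> U \<union> S" and arc: "(u,w) \<in> up_arcs V E \<pi>"
        show "w \<in> U \<union> S \<or> r w > off + card W"
        proof (cases "u \<in> S")
          case True then show ?thesis using Sclos arc by auto
        next
          case False
          then have uU: "u \<in> U" using u by auto
          then have uA: "u \<in> A" using U by auto
          from arc_inv[OF arc] obtain k where wV: "w \<in> V" and k: "k < r u" "lp E r k u w" by auto
          have "w \<notin> B"
          proof
            assume wB: "w \<in> B"
            have "u \<in> B \<or> r u > off + card A + card B"
              using lp_cross[OF lp_sym[OF k(2)] wB _ HB] k(1) rA[OF uA] by auto
            then show False using uA AB rA[OF uA] by auto
          qed
          have "w \<in> U \<or> r w > off + card A" using U(4) uU arc by blast
          then show ?thesis
          proof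
            assume "r w > off + card A"
            then show ?thesis using inS[OF wV] inB[OF wV] \<open>w \<notin> B\<close> by (meson UnI2 not_le)
          qed simp
        qed
      qed
    qed (use 1 U AW SW in auto)
  next
    case 2
    obtain U where U: "v \<in> U" "U \<subseteq> B" "real (card U) \<le> C * real (card B) powr \<alpha>"
      "\<forall>u\<in>U. \<forall>w. (u,w) \<in> up_arcs V E \<pi> \<longrightarrow> w \<in> U \<or> r w > off + card A + card B"
    proof -
      have o: "off + card A + card B \<le> card V" using offW cardW by linarith
      have B': "B \<subseteq> V" using WV BW by blast
      have rho': "\<forall>i. \<rho> (card A + i) = \<pi> (off + card A + i)" using rho by (simp add: add.assoc)
      from nd_step.IH(2)[OF indB B' rho' o KB HB 2] show ?thesis using that unfolding C_def q_def by blast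
    qed
    show ?thesis
    proof (intro exI[of _ "U \<union> S"] conjI)
      have "real (card (U \<union> S)) \<le> real (card U) + real (card S)"
        by (metis card_Un_le of_nat_add of_nat_le_iff)
      also have "\<dots> \<le> C * (q * real (card W) powr \<alpha>) + c * real (card W) powr \<alpha>"
      proof -
        have "C * real (card B) powr \<alpha> \<le> C * (q * real (card W) powr \<alpha>)"
          using pow_bound[OF cB par(1)] C0 unfolding q_def by (rule mult_left_mono)
        then show ?thesis using U(3) cS by linarith
      qed
      also have "\<dots> = (C * q + c) * real (card W) powr \<alpha>" by (simp add: algebra_simps)
      also have "\<dots> = C * real (card W) powr \<alpha>" using Cq by simp
      finally show "real (card (U \<union> S)) \<le> c / (1 - (2/3) powr \<alpha>) * real (card W) powr \<alpha>"
        unfolding C_def q_def .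
      show "\<forall>u\<in>U \<union> S. \<forall>w. (u,w) \<in> up_arcs V E \<pi> \<longrightarrow> w \<in> U \<union> S \<or> r w > off + card W"
      proof (intro ballI allI impI)
        fix u w assume u: "u \<in> U \<union> S" and arc: "(u,w) \<in> up_arcs V E \<pi>"
        show "w \<in> U \<union> S \<or> r w > off + card W"
        proof (cases "u \<in> S")
          case True then show ?thesis using Sclos arc by auto
        next
          case False
          then have uU: "u \<in> U" using u by auto
          from arc_inv[OF arc] have wV: "w \<in> V" by auto
          have "w \<in> U \<or> r w > off + card A + card B" using U(4) uU arc by blast
          then show ?thesis
          proof
            assume "r w > off + card A + card B"
            then show ?thesis using inS[OF wV] by (meson UnI2 not_le)
          qed simp
        qed
      qed
    qed (use 2 U BW SW in auto)
  qed
qed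

end

theorem mainTheorem1:
  fixes \<alpha> c :: real
  assumes "0 < \<alpha>" "\<alpha> < 1" "0 < c"
  shows "\<exists>C::real. \<forall>K :: ('a set \<times> 'a set set) set.
           (\<forall>(V, E)\<in>K. simple_graph V E) \<longrightarrow>
           subgraph_closed K \<longrightarrow>
           (\<forall>(H, F)\<in>K. \<exists>S A B. is_bal_sep H F S A B \<and> real (card S) \<le> c * real (card H) powr \<alpha>) \<longrightarrow>
           (\<forall>V E \<pi> v. (V, E) \<in> K \<longrightarrow> card V \<ge> 1 \<longrightarrow> nd_order V E \<pi> \<longrightarrow> v \<in> V \<longrightarrow>
              real (card (search_space V E \<pi> v)) \<le> C * real (card V) powr \<alpha>)"
proof (intro exI[of _ "c / (1 - (2/3) powr \<alpha>)"] allI impI)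
  fix K :: "('a set \<times> 'a set set) set" and V E \<pi> v
  assume simp: "\<forall>(V, E)\<in>K. simple_graph V E" and sc: "subgraph_closed K"
    and sep: "\<forall>(H, F)\<in>K. \<exists>S A B. is_bal_sep H F S A B \<and> real (card S) \<le> c * real (card H) powr \<alpha>"
    and VE: "(V, E) \<in> K" and "card V \<ge> 1" and nd: "nd_order V E \<pi>" and vV: "v \<in> V"
  have sg: "simple_graph V E" using simp VE by auto
  interpret glob V E \<pi> using sg nd_bij[OF nd] by unfold_locales
  have EV: "E = induced_edges E V" using sg unfolding simple_graph_def induced_edges_def by auto
  have H: "\<forall>a\<in>V. \<forall>b. {a,b} \<in> E \<longrightarrow> b \<in> V \<or> r b > 0 + card V" using edgeV by auto
  obtain U where U: "v \<in> U" "U \<subseteq> V" "real (card U) \<le> c / (1 - (2/3) powr \<alpha>) * real (card V) powr \<alpha>"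
    "\<forall>u\<in>U. \<forall>w. (u,w) \<in> up_arcs V E \<pi> \<longrightarrow> w \<in> U \<or> r w > 0 + card V"
    using main[OF nd sc sep assms, of 0 v] EV H VE vV by auto
  have "search_space V E \<pi> v \<subseteq> U"
  proof
    fix w assume "w \<in> search_space V E \<pi> v"
    then have "(v,w) \<in> (up_arcs V E \<pi>)\<^sup>*" unfolding search_space_def by auto
    then show "w \<in> U"
    proof (induction rule: rtrancl_induct)
      case base then show ?case using U by simp
    next
      case (step y z)
      have "z \<in> V" using arc_inv[OF step(2)] by auto
      then have "r z \<le> card V" using rank_range by auto
      then show ?case using U(4) step by fastforce
    qed
  qed
  moreover have "finite U" using U(2) finV finite_subset by blast
  ultimately have "card (search_space V E \<pi> v) \<le> card U" by (simp add: card_mono)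
  then show "real (card (search_space V E \<pi> v)) \<le> c / (1 - (2/3) powr \<alpha>) * real (card V) powr \<alpha>"
    using U(3) by linarith
qed

end
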